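(* Let $K$ be a global function field, fix a prime $\infty$ of $K$, let $\mathcal{O}$ be the ring of elements of $K$ regular at every prime other than $\infty$, and let $\mathbb{F}_q$ be the full constant field of $K$ (so $\mathcal{O}^*=\mathbb{F}_q^*$). Let $\phi\in\mathcal{O}[X]$ be a polynomial of degree $d\geqslant2$ with leading coefficient in $\mathcal{O}^*$. If $\mathrm{Per}(\phi,K)$ contains at least two fixed points and a cycle of length greater than $1$, then $\mathcal{P}=\mathrm{Per}(\phi,K)$ satisfies: $\phi(\mathcal{P})\subseteq\mathcal{P}$, and the differences $y-x$, with $(x,y)$ ranging over pairs of distinct elements of $\mathcal{P}$, are all equal up to multiplication by elements of $\mathbb{F}_q^*$.
   Context: A global function field is a finite extension of $\mathbb{F}_p(t)$; its full constant field is the algebraic closure of $\mathbb{F}_p$ in $K$. $\phi$ is viewed as a map $K\to K$; $\mathrm{Per}(\phi,K)$ is the set of $x\in K$ with $\phi^n(x)=x$ for some $n\geqslant1$; a cycle is the forward orbit of a periodic point and its length is its cardinality. *)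

theory Defs
  imports "HOL-Computational_Algebra.Computational_Algebra"
begin

definition prime_subfield :: "'a::field set" where
  "prime_subfield = range of_int"

definition algebraic_over_prime :: "'a::field \<Rightarrow> bool" where
  "algebraic_over_prime x \<longleftrightarrow>
     (\<exists>f :: 'a poly. f \<noteq> 0 \<and> (\<forall>i. coeff f i \<in> prime_subfield) \<and> poly f x = 0)"

definition rat_fun_subfield :: "'a::field \<Rightarrow> 'a set" where
  "rat_fun_subfield t = {poly f t / poly g t | f g.
      (\<forall>i. coeff f i \<in> prime_subfield) \<and> (\<forall>i. coeff g i \<in> prime_subfield) \<and> poly g t \<noteq> 0}"

text \<open>K (the whole type) is a global function field: positive characteristic and a finite
  extension of F_p(t) for some t transcendental over F_p.\<close>
definition global_function_field :: "'a::field itself \<Rightarrow> bool" where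
  "global_function_field _ \<longleftrightarrow> CHAR('a) > 0 \<and>
     (\<exists>t::'a. \<not> algebraic_over_prime t \<and>
        (\<exists>B :: 'a set. finite B \<and>
           (\<forall>x::'a. \<exists>c. (\<forall>b\<in>B. c b \<in> rat_fun_subfield t) \<and> x = (\<Sum>b\<in>B. c b * b))))"

text \<open>A prime (place) of K, represented by its valuation ring: a proper subring V of K such
  that for every nonzero x, x or its inverse lies in V.\<close>
definition is_prime_of :: "'a::field set \<Rightarrow> bool" where
  "is_prime_of V \<longleftrightarrow> 1 \<in> V \<and> (\<forall>x\<in>V. \<forall>y\<in>V. x + y \<in> V \<and> x * y \<in> V \<and> - x \<in> V)
     \<and> V \<noteq> UNIV \<and> (\<forall>x. x \<noteq> 0 \<longrightarrow> x \<in> V \<or> inverse x \<in> V)"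

definition ring_away_from :: "'a::field set \<Rightarrow> 'a set" where
  "ring_away_from Vinf = {x. \<forall>V. is_prime_of V \<and> V \<noteq> Vinf \<longrightarrow> x \<in> V}"

text \<open>The full constant field: algebraic closure of F_p in K.\<close>
definition constant_field :: "'a::field set" where
  "constant_field = {x. algebraic_over_prime x}"

definition periodic_points :: "('a \<Rightarrow> 'a) \<Rightarrow> 'a set" where
  "periodic_points f = {x. \<exists>n\<ge>1. (f ^^ n) x = x}"

end

theory Submission
  imports Defs
begin

definition subr :: "'a::field set \<Rightarrow> bool" where
  "subr R \<longleftrightarrow> 1 \<in> R \<and> (\<forall>x\<in>R. \<forall>y\<in>R. x + y \<in> R \<and> x * y \<in> R \<and> - x \<in> R)"

lemma subrD:
  assumes "subr R"
  shows subr_one: "1 \<in> R" and subr_add: "x \<in> R \<Longrightarrow> y \<in> R \<Longrightarrow> x + y \<in> R"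
    and subr_mult: "x \<in> R \<Longrightarrow> y \<in> R \<Longrightarrow> x * y \<in> R"
    and subr_uminus: "x \<in> R \<Longrightarrow> - x \<in> R"
  using assms unfolding subr_def by auto

lemma subr_zero: "subr R \<Longrightarrow> 0 \<in> R"
  using subrD[of R] by (metis add.right_inverse)

lemma subr_diff: "subr R \<Longrightarrow> x \<in> R \<Longrightarrow> y \<in> R \<Longrightarrow> x - y \<in> R"
  using subrD[of R] by (metis diff_conv_add_uminus)

lemma subr_power: "subr R \<Longrightarrow> x \<in> R \<Longrightarrow> x ^ n \<in> R"
  by (induction n) (auto intro: subrD)

lemma subr_of_nat: "subr R \<Longrightarrow> of_nat n \<in> R"
  by (induction n) (auto intro: subrD subr_zero)

lemma subr_of_int: "subr R \<Longrightarrow> of_int k \<in> R"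
  by (cases k rule: int_cases2) (auto intro: subrD subr_of_nat)

lemma subr_prime_subfield: "subr R \<Longrightarrow> prime_subfield \<subseteq> R"
  unfolding prime_subfield_def using subr_of_int by blast

lemma subr_sum: "subr R \<Longrightarrow> (\<And>i. i \<in> A \<Longrightarrow> f i \<in> R) \<Longrightarrow> sum f A \<in> R"
  by (induction A rule: infinite_finite_induct) (auto intro: subrD subr_zero)

lemma subr_poly: "subr R \<Longrightarrow> (\<forall>i. coeff p i \<in> R) \<Longrightarrow> x \<in> R \<Longrightarrow> poly p x \<in> R"
proof (induction p)
  case (pCons a p)
  then show ?case by (auto intro!: subrD(2,3) simp: coeff_pCons split: nat.splits)
qed (simp add: subr_zero)

lemma subr_Inter: "(\<And>V. V \<in> F \<Longrightarrow> subr V) \<Longrightarrow> subr (\<Inter>F)"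
  unfolding subr_def by blast

lemma prime_subr: "is_prime_of V \<Longrightarrow> subr V"
  unfolding is_prime_of_def subr_def by blast

lemma prime_val: "is_prime_of V \<Longrightarrow> x \<notin> V \<Longrightarrow> inverse x \<in> V"
  unfolding is_prime_of_def by (metis subr_zero subr_def)

definition nu :: "'a::field set \<Rightarrow> 'a \<Rightarrow> bool" where
  "nu V z \<longleftrightarrow> z \<in> V \<and> inverse z \<notin> V"

definition un :: "'a::field set \<Rightarrow> 'a \<Rightarrow> bool" where
  "un V z \<longleftrightarrow> z \<in> V \<and> inverse z \<in> V \<and> z \<noteq> 0"

lemma nu_nz: "is_prime_of V \<Longrightarrow> nu V z \<Longrightarrow> z \<noteq> 0"
  unfolding nu_def using subr_zero prime_subr by fastforce

lemma nu_mult: assumes "is_prime_of V" "nu V a" "b \<in> V" "b \<noteq> 0" shows "nu V (a * b)"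
proof -
  have S: "subr V" using assms prime_subr by blast
  have "a * b \<in> V" using assms S subr_mult unfolding nu_def by blast
  moreover have "inverse (a * b) \<notin> V"
  proof
    assume "inverse (a * b) \<in> V"
    then have "inverse (a*b) * b \<in> V" using S assms subr_mult by blast
    also have "inverse (a*b) * b = inverse a" using assms by (simp add: field_simps nu_nz)
    finally show False using assms unfolding nu_def by blast
  qed
  ultimately show ?thesis unfolding nu_def by blast
qed

lemma nu_uminus: "is_prime_of V \<Longrightarrow> nu V a \<Longrightarrow> nu V (- a)"
  unfolding nu_def using prime_subr subr_uminus by (metis inverse_minus_eq minus_minus)

lemma nu_add: assumes "is_prime_of V" "nu V a" "nu V b" "a + b \<noteq> 0" shows "nu V (a + b)"
proof -
  have S: "subr V" using assms prime_subr by blast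
  have nz: "a \<noteq> 0" "b \<noteq> 0" using assms nu_nz by blast+
  have key: "nu V (x + y)" if "nu V x" "nu V y" "x + y \<noteq> 0" "x / y \<in> V" for x y
  proof -
    have y0: "y \<noteq> 0" using that assms nu_nz by blast
    have "1 + x / y \<in> V" using S that subrD by blast
    moreover have "1 + x / y \<noteq> 0" using that y0 by (simp add: field_simps)
    ultimately have "nu V (y * (1 + x / y))" using nu_mult assms that by blast
    also have "y * (1 + x / y) = x + y" using y0 by (simp add: field_simps)
    finally show ?thesis .
  qed
  show ?thesis
  proof (cases "a / b \<in> V")
    case True then show ?thesis using key assms by blast
  next
    case False
    then have "inverse (a / b) \<in> V" using prime_val assms by blast
    then have "b / a \<in> V" by simp
    then show ?thesis using key[of b a] assms by (simp add: add.commute)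
  qed
qed

lemma un_add_nu: assumes "is_prime_of V" "un V u" "nu V t" shows "un V (u + t)"
proof -
  have S: "subr V" using assms prime_subr by blast
  have inV: "u + t \<in> V" using assms S subrD unfolding un_def nu_def by blast
  have nz: "u + t \<noteq> 0"
  proof
    assume "u + t = 0"
    then have "t = - u" by (simp add: eq_neg_iff_add_eq_0 add.commute)
    then have "inverse t = - inverse u" by simp
    then have "inverse t \<in> V" using assms S subr_uminus unfolding un_def by metis
    then show False using assms unfolding nu_def by blast
  qed
  have "inverse (u + t) \<in> V"
  proof (rule ccontr)
    assume "inverse (u + t) \<notin> V"
    then have "nu V (u + t)" using inV unfolding nu_def by blast
    moreover have "nu V (- t)" using nu_uminus assms by blast
    moreover have "u + t + - t \<noteq> 0" using assms unfolding un_def by simp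
    ultimately have "nu V (u + t + - t)" using nu_add assms by blast
    then show False using assms unfolding nu_def un_def by simp
  qed
  then show ?thesis using inV nz unfolding un_def by blast
qed

lemma poly_un:
  assumes "is_prime_of V" "\<forall>i. coeff g i \<in> V" "un V (coeff g 0)" "nu V z"
  shows "un V (poly g z)"
proof (cases g)
  case (pCons a q)
  have S: "subr V" using assms prime_subr by blast
  have a: "un V a" using assms pCons by simp
  have q: "\<forall>i. coeff q i \<in> V" using assms(2) pCons by (metis coeff_pCons_Suc)
  have zV: "z \<in> V" using assms unfolding nu_def by blast
  have pq: "poly q z \<in> V" using subr_poly[OF S q zV] .
  show ?thesis
  proof (cases "poly q z = 0")
    case True then show ?thesis using pCons a by simp
  next
    case False
    then have "nu V (z * poly q z)" using nu_mult assms pq by blast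
    then show ?thesis using un_add_nu[OF assms(1) a] pCons by simp
  qed
qed

lemma fp_inv:
  assumes "CHAR('a::field) > 0" "(c::'a) \<in> prime_subfield" "c \<noteq> 0"
  shows "inverse c \<in> prime_subfield"
proof -
  obtain k where k: "c = of_int k" using assms unfolding prime_subfield_def by blast
  have pr: "prime (int CHAR('a))" using prime_CHAR_semidom[OF assms(1)] by simp
  have "\<not> int CHAR('a) dvd k" using assms k of_int_eq_0_iff_char_dvd by blast
  then have "coprime (int CHAR('a)) k" using pr prime_imp_coprime by blast
  then have g: "gcd k (int CHAR('a)) = 1" by (metis coprime_iff_gcd_eq_1 gcd.commute)
  obtain u v where uv: "u * k + v * int CHAR('a) = 1" using bezout_int[of k "int CHAR('a)"] g by auto
  have "(of_int (u * k + v * int CHAR('a)) :: 'a) = 1" using uv by simp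
  then have "of_int u * c = (1::'a)" using k by simp
  then have "inverse c = of_int u" using assms(3) by (metis inverse_unique mult.commute)
  then show ?thesis unfolding prime_subfield_def by blast
qed

lemma un_fp:
  assumes "CHAR('a::field) > 0" "is_prime_of V" "(c::'a) \<in> prime_subfield" "c \<noteq> 0"
  shows "un V c"
  using fp_inv[OF assms(1,3,4)] subr_prime_subfield[OF prime_subr[OF assms(2)]] assms
  unfolding un_def by blast

lemma coeff_reflect_in: "0 \<in> S \<Longrightarrow> (\<forall>i. coeff f i \<in> S) \<Longrightarrow> coeff (reflect_poly f) i \<in> S"
  by (simp add: coeff_reflect_poly)

lemma alg_in_V:
  assumes "CHAR('a::field) > 0" "is_prime_of V" "algebraic_over_prime (x::'a)"
  shows "x \<in> V"
proof (rule ccontr)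
  assume xV: "x \<notin> V"
  have S: "subr V" using assms prime_subr by blast
  obtain f :: "'a poly" where f: "f \<noteq> 0" "\<forall>i. coeff f i \<in> prime_subfield" "poly f x = 0"
    using assms unfolding algebraic_over_prime_def by blast
  have x0: "x \<noteq> 0" using xV subr_zero[OF S] by blast
  have z: "nu V (inverse x)" using prime_val[OF assms(2) xV] xV unfolding nu_def by simp
  have fpV: "prime_subfield \<subseteq> V" using subr_prime_subfield[OF S] .
  have z0: "0 \<in> prime_subfield" unfolding prime_subfield_def by (metis of_int_0 rangeI)
  have cg: "\<forall>i. coeff (reflect_poly f) i \<in> V" using coeff_reflect_in[OF z0 f(2)] fpV by blast
  have "un V (coeff (reflect_poly f) 0)"
    using un_fp[OF assms(1,2)] f by simp
  then have "un V (poly (reflect_poly f) (inverse x))" using poly_un[OF assms(2) cg _ z] by blast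
  moreover have "poly (reflect_poly f) (inverse x) = 0"
    using poly_reflect_poly_nz[of "inverse x" f] x0 f(3) by simp
  ultimately show False unfolding un_def by blast
qed

lemma alg_inverse:
  assumes "algebraic_over_prime (x::'a::field)"
  shows "algebraic_over_prime (inverse x)"
proof (cases "x = 0")
  case True then show ?thesis using assms by simp
next
  case False
  obtain f :: "'a poly" where f: "f \<noteq> 0" "\<forall>i. coeff f i \<in> prime_subfield" "poly f x = 0"
    using assms unfolding algebraic_over_prime_def by blast
  have z0: "0 \<in> prime_subfield" unfolding prime_subfield_def by (metis of_int_0 rangeI)
  have "poly (reflect_poly f) (inverse x) = 0"
    using poly_reflect_poly_nz[of "inverse x" f] False f(3) by simp
  then show ?thesis unfolding algebraic_over_prime_def
    using f coeff_reflect_in[OF z0 f(2)] by (metis reflect_poly_eq_0_iff)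
qed

definition Rx :: "'a::field set \<Rightarrow> 'a \<Rightarrow> 'a set" where
  "Rx R x = {poly f x | f. \<forall>i. coeff f i \<in> R}"

lemma Rx_sub: "subr R \<Longrightarrow> R \<subseteq> Rx R x"
proof
  fix r assume "subr R" "r \<in> R"
  then have "\<forall>i. coeff [:r:] i \<in> R" by (simp add: coeff_pCons subr_zero split: nat.splits)
  moreover have "poly [:r:] x = r" by simp
  ultimately show "r \<in> Rx R x" unfolding Rx_def by (smt (verit) mem_Collect_eq)
qed

lemma Rx_x: "subr R \<Longrightarrow> x \<in> Rx R x"
proof -
  assume S: "subr R"
  have "\<forall>i. coeff [:0,1:] i \<in> R" using S by (simp add: coeff_pCons subr_zero subr_one split: nat.splits)
  moreover have "poly [:0,1:] x = x" by simp
  ultimately show ?thesis unfolding Rx_def by (smt (verit) mem_Collect_eq)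
qed

lemma Rx_subr: assumes S: "subr R" shows "subr (Rx R x)"
proof -
  have "1 \<in> Rx R x" using Rx_sub[OF S] subr_one[OF S] by blast
  moreover have "a + b \<in> Rx R x \<and> a * b \<in> Rx R x \<and> - a \<in> Rx R x" if ab: "a \<in> Rx R x" "b \<in> Rx R x" for a b
  proof -
    obtain f g where f: "\<forall>i. coeff f i \<in> R" "a = poly f x" and g: "\<forall>i. coeff g i \<in> R" "b = poly g x"
      using ab unfolding Rx_def by blast
    have "\<forall>i. coeff (f + g) i \<in> R" using f g subr_add[OF S] by simp
    moreover have "\<forall>i. coeff (f * g) i \<in> R" using f g S
      by (auto simp: coeff_mult intro!: subr_sum subr_mult)
    moreover have "\<forall>i. coeff (- f) i \<in> R" using f S subr_uminus by auto
    ultimately have "poly (f + g) x \<in> Rx R x" "poly (f * g) x \<in> Rx R x" "poly (- f) x \<in> Rx R x"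
      unfolding Rx_def by blast+
    then show ?thesis using f g by simp
  qed
  ultimately show ?thesis unfolding subr_def by blast
qed

lemma subr_fp: "subr (prime_subfield :: 'a::field set)"
  unfolding subr_def prime_subfield_def
proof (intro conjI ballI)
  show "1 \<in> range of_int" by (metis of_int_1 rangeI)
  fix x y :: 'a assume "x \<in> range of_int" "y \<in> range of_int"
  then obtain a b where "x = of_int a" "y = of_int b" by blast
  then show "x + y \<in> range of_int" "x * y \<in> range of_int" "- x \<in> range of_int"
    by (metis of_int_add rangeI, metis of_int_mult rangeI, metis of_int_minus rangeI)
qed

lemma alg_zero: "algebraic_over_prime (0::'a::field)"
proof -
  have "(0::'a) \<in> prime_subfield" "(1::'a) \<in> prime_subfield" using subr_zero[OF subr_fp] subr_one[OF subr_fp] by auto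
  then have "\<forall>i. coeff [:0::'a,1:] i \<in> prime_subfield"
    by (simp add: coeff_pCons split: nat.splits)
  then show ?thesis unfolding algebraic_over_prime_def by (intro exI[of _ "[:0,1:]"]) auto
qed

definition goodR :: "'a::field \<Rightarrow> 'a set \<Rightarrow> bool" where
  "goodR v R \<longleftrightarrow> subr R \<and> inverse v \<in> R \<and> v \<notin> R"

definition maxR :: "'a::field \<Rightarrow> 'a set \<Rightarrow> bool" where
  "maxR v R \<longleftrightarrow> goodR v R \<and> (\<forall>X. goodR v X \<and> R \<subseteq> X \<longrightarrow> X = R)"

definition Iv :: "'a::field \<Rightarrow> 'a set \<Rightarrow> 'a set" where
  "Iv v R = {inverse v * r | r. r \<in> R}"

lemma maxR_subr: "maxR v R \<Longrightarrow> subr R"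
  unfolding maxR_def goodR_def by blast

lemma maxR_v0: "maxR v R \<Longrightarrow> v \<noteq> 0"
  unfolding maxR_def goodR_def using subr_zero by blast

lemma IvI: "r \<in> R \<Longrightarrow> inverse v * r \<in> Iv v R"
  unfolding Iv_def by blast

lemma Iv_mult: "subr R \<Longrightarrow> a \<in> Iv v R \<Longrightarrow> r \<in> R \<Longrightarrow> a * r \<in> Iv v R"
proof -
  assume S: "subr R" and a: "a \<in> Iv v R" and r: "r \<in> R"
  then obtain q where q: "q \<in> R" "a = inverse v * q" unfolding Iv_def by blast
  then have "a * r = inverse v * (q * r)" by (simp add: mult.assoc)
  then show ?thesis using IvI[OF subr_mult[OF S q(1) r], of v] by metis
qed

lemma Iv_add: "subr R \<Longrightarrow> a \<in> Iv v R \<Longrightarrow> b \<in> Iv v R \<Longrightarrow> a + b \<in> Iv v R"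
proof -
  assume S: "subr R" and a: "a \<in> Iv v R" and b: "b \<in> Iv v R"
  obtain q where q: "q \<in> R" "a = inverse v * q" using a unfolding Iv_def by blast
  obtain p where p: "p \<in> R" "b = inverse v * p" using b unfolding Iv_def by blast
  have "a + b = inverse v * (q + p)" using p q by (simp add: distrib_left)
  then show ?thesis using IvI[OF subr_add[OF S q(1) p(1)]] by simp
qed

lemma Iv_diff: "subr R \<Longrightarrow> a \<in> Iv v R \<Longrightarrow> b \<in> Iv v R \<Longrightarrow> a - b \<in> Iv v R"
proof -
  assume S: "subr R" and a: "a \<in> Iv v R" and b: "b \<in> Iv v R"
  obtain q where q: "q \<in> R" "a = inverse v * q" using a unfolding Iv_def by blast
  obtain p where p: "p \<in> R" "b = inverse v * p" using b unfolding Iv_def by blast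
  have "a - b = inverse v * (q - p)" using p q by (simp add: right_diff_distrib)
  then show ?thesis using IvI[OF subr_diff[OF S q(1) p(1)]] by simp
qed

lemma Iv_sub: "subr R \<Longrightarrow> inverse v \<in> R \<Longrightarrow> Iv v R \<subseteq> R"
  unfolding Iv_def using subr_mult by blast

lemma Iv_one: "maxR v R \<Longrightarrow> 1 \<notin> Iv v R"
proof
  assume M: "maxR v R" and "1 \<in> Iv v R"
  then obtain r where r: "r \<in> R" "1 = inverse v * r" unfolding Iv_def by blast
  then have "r = v" using maxR_v0[OF M] by (metis mult.left_neutral mult.right_neutral right_inverse mult.assoc)
  then show False using M r unfolding maxR_def goodR_def by blast
qed

lemma maxR_local:
  assumes M: "maxR v R" and b: "b \<in> R"
  shows "1 - inverse v * b \<noteq> 0 \<and> inverse (1 - inverse v * b) \<in> R"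
proof -
  define w where "w = inverse v"
  define s where "s = 1 - w * b"
  have S: "subr R" using M maxR_subr by blast
  have v0: "v \<noteq> 0" using M maxR_v0 by blast
  have wR: "w \<in> R" and vR: "v \<notin> R" using M unfolding maxR_def goodR_def w_def by blast+
  have vw: "v * w = 1" using v0 w_def by simp
  have sR: "s \<in> R" unfolding s_def using S wR b by (blast intro: subr_diff subr_one subr_mult)
  have s0: "s \<noteq> 0"
  proof
    assume "s = 0"
    then have "w * b = 1" unfolding s_def by simp
    then have "b = v" using vw by (metis mult.assoc mult.commute mult_1_right)
    then show False using b vR by blast
  qed
  have pw: "\<exists>c\<in>R. s ^ n = 1 - w * c" for n
  proof (induction n)
    case 0 then show ?case using subr_zero[OF S] by (intro bexI[of _ 0]) auto
  next
    case (Suc n)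
    then obtain c where c: "c \<in> R" "s ^ n = 1 - w * c" by blast
    have "s ^ Suc n = s * s ^ n" by simp
    also have "\<dots> = (1 - w * b) * (1 - w * c)" using c unfolding s_def by simp
    also have "\<dots> = 1 - w * (b + c - w * b * c)" by (simp add: algebra_simps)
    finally have "s ^ Suc n = 1 - w * (b + c - w * b * c)" .
    moreover have "b + c - w * b * c \<in> R" using S b c wR by (blast intro: subr_add subr_diff subr_mult)
    ultimately show ?case by blast
  qed
  have good: "goodR v (Rx R (inverse s))"
    unfolding goodR_def
  proof (intro conjI)
    show "subr (Rx R (inverse s))" using Rx_subr[OF S] .
    show "inverse v \<in> Rx R (inverse s)" using Rx_sub[OF S] wR w_def by blast
    show "v \<notin> Rx R (inverse s)"
    proof
      assume "v \<in> Rx R (inverse s)"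
      then obtain f where f: "\<forall>i. coeff f i \<in> R" "v = poly f (inverse s)" unfolding Rx_def by blast
      have e1: "poly (reflect_poly f) s = s ^ degree f * v" using poly_reflect_poly_nz[OF s0, of f] f by simp
      have e2: "poly (reflect_poly f) s \<in> R"
        using subr_poly[OF S _ sR] coeff_reflect_in[OF subr_zero[OF S] f(1)] by blast
      obtain c where c: "c \<in> R" "s ^ degree f = 1 - w * c" using pw by blast
      have "s ^ degree f * v = (1 - w * c) * v" using c(2) by simp
      also have "\<dots> = v - c * (v * w)" by (simp add: algebra_simps)
      also have "\<dots> = v - c" using vw by simp
      finally have "v - c \<in> R" using e1 e2 by simp
      then have "v - c + c \<in> R" using S c subr_add by blast
      then show False using vR by simp
    qed
  qed
  then have "Rx R (inverse s) = R" using M Rx_sub[OF S] unfolding maxR_def by blast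
  then have "inverse s \<in> R" using Rx_x[OF S] by metis
  then show ?thesis using s0 unfolding s_def w_def by blast
qed

lemma maxR_bad:
  assumes M: "maxR v R" and x: "x \<notin> R"
  shows "\<exists>f. (\<forall>i. coeff f i \<in> Iv v R) \<and> poly f x = 1"
proof -
  have S: "subr R" using M maxR_subr by blast
  have v0: "v \<noteq> 0" using M maxR_v0 by blast
  have wR: "inverse v \<in> R" using M unfolding maxR_def goodR_def by blast
  have "v \<in> Rx R x"
  proof (rule ccontr)
    assume "v \<notin> Rx R x"
    then have "goodR v (Rx R x)" unfolding goodR_def using Rx_subr[OF S] Rx_sub[OF S] wR by blast
    then have "Rx R x = R" using M Rx_sub[OF S] unfolding maxR_def by blast
    then show False using Rx_x[OF S] x by metis
  qed
  then obtain f where f: "\<forall>i. coeff f i \<in> R" "v = poly f x" unfolding Rx_def by blast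
  have "\<forall>i. coeff (smult (inverse v) f) i \<in> Iv v R" using f unfolding Iv_def by auto
  moreover have "poly (smult (inverse v) f) x = 1" using f v0 by simp
  ultimately show ?thesis by blast
qed

lemma maxR_core:
  assumes M: "maxR v R" and y0: "y \<noteq> 0"
    and f: "\<forall>i. coeff f i \<in> Iv v R" "poly f y = 1"
    and fmin: "\<forall>f'. (\<forall>i. coeff f' i \<in> Iv v R) \<and> poly f' y = 1 \<longrightarrow> degree f \<le> degree f'"
    and g: "\<forall>i. coeff g i \<in> Iv v R" "poly g (inverse y) = 1" "degree g \<le> degree f"
  shows False
proof -
  define n where "n = degree f"
  define m where "m = degree g"
  have S: "subr R" using M maxR_subr by blast
  have wR: "inverse v \<in> R" using M unfolding maxR_def goodR_def by blast
  have IR: "Iv v R \<subseteq> R" using Iv_sub[OF S wR] .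
  obtain r0 where r0: "r0 \<in> R" "coeff g 0 = inverse v * r0" using g(1) unfolding Iv_def by blast
  define s where "s = 1 - coeff g 0"
  have s: "s \<noteq> 0" "inverse s \<in> R" using maxR_local[OF M r0(1)] r0 unfolding s_def by auto
  have mn: "m \<le> n" using g(3) unfolding m_def n_def .
  have e1: "(\<Sum>j\<le>m. coeff g j * inverse y ^ j) = 1" using g(2) unfolding poly_altdef m_def .
  have e2: "y ^ n = (\<Sum>j\<le>m. coeff g j * y ^ (n - j))"
  proof -
    have "y ^ n = y ^ n * (\<Sum>j\<le>m. coeff g j * inverse y ^ j)" using e1 by simp
    also have "\<dots> = (\<Sum>j\<le>m. coeff g j * (y ^ n * inverse y ^ j))"
      by (simp add: sum_distrib_left algebra_simps)
    also have "\<dots> = (\<Sum>j\<le>m. coeff g j * y ^ (n - j))"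
    proof (rule sum.cong)
      fix j assume "j \<in> {..m}"
      then have "j \<le> n" using mn by simp
      then have "y ^ (n - j) = y ^ n / y ^ j" using power_diff[OF y0] by blast
      then show "coeff g j * (y ^ n * inverse y ^ j) = coeff g j * y ^ (n - j)"
        by (simp add: divide_inverse power_inverse)
    qed simp
    finally show ?thesis .
  qed
  have "{..m} = insert 0 {1..m}" by auto
  then have e3: "(\<Sum>j\<le>m. coeff g j * y ^ (n - j)) = coeff g 0 * y ^ n + (\<Sum>j\<in>{1..m}. coeff g j * y ^ (n - j))"
    by simp
  define P where "P = (\<Sum>j\<in>{1..m}. monom (coeff g j) (n - j))"
  have pP: "poly P y = y ^ n * s" using e2 e3 unfolding P_def s_def poly_sum poly_monom
    by (simp add: algebra_simps)
  define a where "a = coeff f n"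
  have aI: "a \<in> Iv v R" using f(1) unfolding a_def by blast
  define f' where "f' = f - monom a n + smult (a * inverse s) P"
  have pf': "poly f' y = 1" unfolding f'_def using f(2) pP s(1) by (simp add: poly_monom)
  have cP: "coeff P i = (\<Sum>j\<in>{1..m}. if n - j = i then coeff g j else 0)" for i
    unfolding P_def coeff_sum by simp
  have cPR: "coeff P i \<in> R" for i
    unfolding cP using IR g(1) subr_zero[OF S] by (intro subr_sum[OF S]) auto
  have cf': "coeff f' i \<in> Iv v R" for i
  proof -
    have "coeff f' i = (coeff f i - (if n = i then a else 0)) + a * (inverse s * coeff P i)"
      unfolding f'_def by (simp add: algebra_simps)
    moreover have "coeff f i - (if n = i then a else 0) \<in> Iv v R"
      using Iv_diff[OF S] f(1) aI IvI[OF subr_zero[OF S], of v] by auto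
    moreover have "a * (inverse s * coeff P i) \<in> Iv v R"
      using Iv_mult[OF S aI] subr_mult[OF S s(2) cPR] by blast
    ultimately show ?thesis using Iv_add[OF S] by metis
  qed
  have hi: "coeff f' i = 0" if "n \<le> i" for i
  proof -
    have "coeff P i = 0" unfolding cP
      by (rule sum.neutral) (use that mn in auto)
    moreover have "coeff f i = (if n = i then a else 0)"
      using that unfolding a_def n_def by (auto simp: coeff_eq_0)
    ultimately show ?thesis unfolding f'_def by simp
  qed
  have "f' \<noteq> 0" using pf' by auto
  then have "coeff f' (degree f') \<noteq> 0" by simp
  then have "degree f' < n" using hi by (meson not_le)
  moreover have "n \<le> degree f'" using fmin cf' pf' unfolding n_def by blast
  ultimately show False by simp
qed

lemma maxR_val:
  assumes M: "maxR v R" and x0: "x \<noteq> 0"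
  shows "x \<in> R \<or> inverse x \<in> R"
proof (rule ccontr)
  assume "\<not> (x \<in> R \<or> inverse x \<in> R)"
  then have nx: "x \<notin> R" "inverse x \<notin> R" by auto
  obtain f0 where "(\<forall>i. coeff f0 i \<in> Iv v R) \<and> poly f0 x = 1" using maxR_bad[OF M nx(1)] by blast
  then obtain f where f: "(\<forall>i. coeff f i \<in> Iv v R) \<and> poly f x = 1"
    and fmin: "\<forall>f'. (\<forall>i. coeff f' i \<in> Iv v R) \<and> poly f' x = 1 \<longrightarrow> degree f \<le> degree f'"
    using ex_has_least_nat[of "\<lambda>f. (\<forall>i. coeff f i \<in> Iv v R) \<and> poly f x = 1" f0 degree] by blast
  obtain g0 where "(\<forall>i. coeff g0 i \<in> Iv v R) \<and> poly g0 (inverse x) = 1" using maxR_bad[OF M nx(2)] by blast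
  then obtain g where g: "(\<forall>i. coeff g i \<in> Iv v R) \<and> poly g (inverse x) = 1"
    and gmin: "\<forall>f'. (\<forall>i. coeff f' i \<in> Iv v R) \<and> poly f' (inverse x) = 1 \<longrightarrow> degree g \<le> degree f'"
    using ex_has_least_nat[of "\<lambda>f. (\<forall>i. coeff f i \<in> Iv v R) \<and> poly f (inverse x) = 1" g0 degree] by blast
  show False
  proof (cases "degree g \<le> degree f")
    case True
    then show False using maxR_core[OF M x0, of f g] f fmin g by blast
  next
    case False
    then show False using maxR_core[OF M _, of "inverse x" g f] f gmin g x0 by simp
  qed
qed

lemma exists_val:
  assumes "\<not> algebraic_over_prime (v::'a::field)"
  shows "\<exists>V. is_prime_of V \<and> v \<notin> V"
proof -
  have v0: "v \<noteq> 0" using assms alg_zero by blast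
  define w where "w = inverse v"
  define R0 where "R0 = Rx prime_subfield w"
  have S0: "subr R0" unfolding R0_def using Rx_subr[OF subr_fp] .
  have g0: "goodR v R0" unfolding goodR_def
  proof (intro conjI)
    show "subr R0" using S0 .
    show "inverse v \<in> R0" unfolding R0_def w_def using Rx_x[OF subr_fp] .
    show "v \<notin> R0"
    proof
      assume "v \<in> R0"
      then obtain f where f: "\<forall>i. coeff f i \<in> prime_subfield" "v = poly f w" unfolding R0_def Rx_def by blast
      define h where "h = pCons (-1) f"
      have "poly h w = 0" unfolding h_def using f v0 w_def by simp
      moreover have "h \<noteq> 0" unfolding h_def by simp
      moreover have "\<forall>i. coeff h i \<in> prime_subfield" unfolding h_def using f subr_uminus[OF subr_fp subr_one[OF subr_fp]]
        by (simp add: coeff_pCons split: nat.splits)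
      ultimately have "algebraic_over_prime w" unfolding algebraic_over_prime_def by blast
      then have "algebraic_over_prime v" using alg_inverse unfolding w_def by fastforce
      then show False using assms by blast
    qed
  qed
  define A where "A = {R. goodR v R}"
  have "\<forall>C\<in>chains A. \<exists>U\<in>A. \<forall>X\<in>C. X \<subseteq> U"
  proof
    fix C assume C: "C \<in> chains A"
    show "\<exists>U\<in>A. \<forall>X\<in>C. X \<subseteq> U"
    proof (cases "C = {}")
      case True then show ?thesis using g0 unfolding A_def by blast
    next
      case False
      have CA: "\<And>X. X \<in> C \<Longrightarrow> goodR v X" using C unfolding chains_def A_def by blast
      have ch: "\<And>X Y. X \<in> C \<Longrightarrow> Y \<in> C \<Longrightarrow> X \<subseteq> Y \<or> Y \<subseteq> X"
        using C unfolding chains_def chain_subset_def by blast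
      have "goodR v (\<Union>C)" unfolding goodR_def subr_def
      proof (intro conjI ballI)
        show "1 \<in> \<Union>C" using False CA unfolding goodR_def subr_def by blast
        show "inverse v \<in> \<Union>C" using False CA unfolding goodR_def by blast
        show "v \<notin> \<Union>C" using CA unfolding goodR_def by blast
        fix x y assume x: "x \<in> \<Union>C" and y: "y \<in> \<Union>C"
        then obtain X Y where XY: "X \<in> C" "Y \<in> C" "x \<in> X" "y \<in> Y" by blast
        then obtain Z where Z: "Z \<in> C" "x \<in> Z" "y \<in> Z" using ch by blast
        then have "subr Z" using CA unfolding goodR_def by blast
        then show "x + y \<in> \<Union>C" "x * y \<in> \<Union>C" "- x \<in> \<Union>C" using Z subrD by blast+
      qed
      then show ?thesis unfolding A_def by blast
    qed
  qed
  then obtain R where R: "R \<in> A" "\<forall>X\<in>A. R \<subseteq> X \<longrightarrow> X = R" using Zorn_Lemma2 by blast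
  then have M: "maxR v R" unfolding maxR_def A_def by blast
  have "is_prime_of R" unfolding is_prime_of_def
    using maxR_subr[OF M] maxR_val[OF M] M unfolding maxR_def goodR_def subr_def by blast
  then show ?thesis using M unfolding maxR_def goodR_def by blast
qed

lemma alg_allV:
  assumes "CHAR('a::field) > 0"
  shows "algebraic_over_prime (x::'a) \<longleftrightarrow> (\<forall>V. is_prime_of V \<longrightarrow> x \<in> V)"
proof
  assume "algebraic_over_prime x" then show "\<forall>V. is_prime_of V \<longrightarrow> x \<in> V"
    using alg_in_V[OF assms] by blast
next
  assume "\<forall>V. is_prime_of V \<longrightarrow> x \<in> V" then show "algebraic_over_prime x"
    using exists_val by metis
qed

lemma alg_closed:
  assumes "CHAR('a::field) > 0" "algebraic_over_prime (a::'a)" "algebraic_over_prime b"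
  shows "algebraic_over_prime (a + b)" "algebraic_over_prime (a - b)" "algebraic_over_prime (a * b)"
    "algebraic_over_prime (a / b)"
proof -
  have A: "a \<in> V" "b \<in> V" if "is_prime_of V" for V using assms that alg_in_V by blast+
  have Bi: "algebraic_over_prime (inverse b)" using alg_inverse assms by blast
  have Bi': "inverse b \<in> V" if "is_prime_of V" for V using Bi assms that alg_in_V by blast
  have "\<forall>V. is_prime_of V \<longrightarrow> a + b \<in> V" using A prime_subr subr_add by blast
  then show "algebraic_over_prime (a + b)" using alg_allV[OF assms(1)] by blast
  have "\<forall>V. is_prime_of V \<longrightarrow> a - b \<in> V" using A prime_subr subr_diff by blast
  then show "algebraic_over_prime (a - b)" using alg_allV[OF assms(1)] by blast
  have "\<forall>V. is_prime_of V \<longrightarrow> a * b \<in> V" using A prime_subr subr_mult by blast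
  then show "algebraic_over_prime (a * b)" using alg_allV[OF assms(1)] by blast
  have "\<forall>V. is_prime_of V \<longrightarrow> a * inverse b \<in> V" using A Bi' prime_subr subr_mult by blast
  then show "algebraic_over_prime (a / b)" using alg_allV[OF assms(1)] by (simp add: divide_inverse)
qed

lemma alg_one: "CHAR('a::field) > 0 \<Longrightarrow> algebraic_over_prime (1::'a)"
proof -
  assume c: "CHAR('a) > 0"
  have "\<forall>V. is_prime_of V \<longrightarrow> (1::'a) \<in> V" using prime_subr subr_one by blast
  then show ?thesis using alg_allV[OF c] by blast
qed

lemma subr_O: "subr (ring_away_from Vinf)"
proof -
  have "ring_away_from Vinf = \<Inter>{V. is_prime_of V \<and> V \<noteq> Vinf}" unfolding ring_away_from_def by blast
  moreover have "subr (\<Inter>{V. is_prime_of V \<and> V \<noteq> Vinf})" by (rule subr_Inter) (use prime_subr in blast)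
  ultimately show ?thesis by simp
qed

lemma unit_alg:
  assumes "CHAR('a::field) > 0" "is_prime_of (Vinf::'a set)"
    "u \<in> ring_away_from Vinf" "inverse u \<in> ring_away_from Vinf"
  shows "algebraic_over_prime u"
proof (cases "u \<in> Vinf")
  case True
  then have "\<forall>V. is_prime_of V \<longrightarrow> u \<in> V" using assms(3) unfolding ring_away_from_def by blast
  then show ?thesis using alg_allV[OF assms(1)] by blast
next
  case False
  then have "inverse u \<in> Vinf" using prime_val assms by blast
  then have "\<forall>V. is_prime_of V \<longrightarrow> inverse u \<in> V" using assms(4) unfolding ring_away_from_def by blast
  then have "algebraic_over_prime (inverse u)" using alg_allV[OF assms(1)] by blast
  then show ?thesis using alg_inverse by fastforce
qed

lemma nu_power: "is_prime_of V \<Longrightarrow> nu V z \<Longrightarrow> k \<ge> 1 \<Longrightarrow> nu V (z ^ k)"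
proof (induction k)
  case (Suc k)
  show ?case
  proof (cases "k = 0")
    case True then show ?thesis using Suc by simp
  next
    case False
    then have "nu V (z ^ k)" using Suc by simp
    moreover have "z \<in> V" "z \<noteq> 0" using Suc nu_nz unfolding nu_def by blast+
    ultimately have "nu V (z ^ k * z)" using nu_mult[OF Suc(2)] by blast
    then show ?thesis by (simp add: mult.commute)
  qed
qed simp

lemma grow_step:
  assumes V: "is_prime_of V" and c: "\<forall>i. coeff \<phi> i \<in> V" and l: "un V (lead_coeff \<phi>)"
    and d: "degree \<phi> \<ge> 2" and y: "y \<notin> V"
  shows "poly \<phi> y \<notin> V \<and> nu V (y / poly \<phi> y)"
proof -
  have S: "subr V" using V prime_subr by blast
  have y0: "y \<noteq> 0" using y subr_zero[OF S] by blast
  define z where "z = inverse y"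
  have z: "nu V z" using prime_val[OF V y] y unfolding nu_def z_def by simp
  have z0: "z \<noteq> 0" using y0 z_def by simp
  have cr: "\<forall>i. coeff (reflect_poly \<phi>) i \<in> V" using coeff_reflect_in[OF subr_zero[OF S] c] by blast
  define u where "u = poly (reflect_poly \<phi>) z"
  have u: "un V u" unfolding u_def using poly_un[OF V cr _ z] l by simp
  have "u = z ^ degree \<phi> * poly \<phi> y" unfolding u_def using poly_reflect_poly_nz[OF z0] z_def by simp
  then have py: "poly \<phi> y = u * y ^ degree \<phi>" using y0 z_def by (simp add: field_simps power_inverse)
  have u0: "u \<noteq> 0" using u unfolding un_def by blast
  have "y / poly \<phi> y = z ^ (degree \<phi> - 1) * inverse u"
  proof -
    have "degree \<phi> = Suc (degree \<phi> - 1)" using d by simp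
    then have "y ^ degree \<phi> = y * y ^ (degree \<phi> - 1)" by (metis power_Suc)
    then show ?thesis using py y0 u0 unfolding z_def by (simp add: field_simps power_inverse)
  qed
  moreover have "nu V (z ^ (degree \<phi> - 1))" using nu_power[OF V z] d by simp
  ultimately have N: "nu V (y / poly \<phi> y)" using nu_mult[OF V] u unfolding un_def by simp
  have "poly \<phi> y \<notin> V"
  proof
    assume "poly \<phi> y \<in> V"
    then have "y / poly \<phi> y * poly \<phi> y \<in> V" using N subr_mult[OF S] unfolding nu_def by blast
    moreover have "poly \<phi> y \<noteq> 0" using py u0 y0 by simp
    ultimately show False using y by simp
  qed
  then show ?thesis using N by blast
qed

lemma periodic_in_V:
  assumes V: "is_prime_of V" and c: "\<forall>i. coeff \<phi> i \<in> V" and l: "un V (lead_coeff \<phi>)"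
    and d: "degree \<phi> \<ge> 2" and n: "n \<ge> 1" "(poly \<phi> ^^ n) x = x"
  shows "x \<in> V"
proof (rule ccontr)
  assume x: "x \<notin> V"
  have S: "subr V" using V prime_subr by blast
  have "k \<ge> 1 \<Longrightarrow> (poly \<phi> ^^ k) x \<notin> V \<and> nu V (x / (poly \<phi> ^^ k) x)" for k
  proof (induction k)
    case (Suc k)
    show ?case
    proof (cases "k = 0")
      case True then show ?thesis using grow_step[OF V c l d x] by simp
    next
      case False
      then have IH: "(poly \<phi> ^^ k) x \<notin> V" "nu V (x / (poly \<phi> ^^ k) x)" using Suc by auto
      define y where "y = (poly \<phi> ^^ k) x"
      have st: "poly \<phi> y \<notin> V" "nu V (y / poly \<phi> y)" using grow_step[OF V c l d] IH y_def by auto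
      have y0: "y \<noteq> 0" using IH subr_zero[OF S] y_def by metis
      have "y / poly \<phi> y \<in> V" "y / poly \<phi> y \<noteq> 0" using st(2) nu_nz[OF V] unfolding nu_def by auto
      then have "nu V (x / y * (y / poly \<phi> y))"
        using nu_mult[OF V] IH y_def by blast
      moreover have "x / y * (y / poly \<phi> y) = x / poly \<phi> y" using y0 by simp
      ultimately have "nu V (x / poly \<phi> y)" by metis
      then show ?thesis using st y_def by simp
    qed
  qed simp
  then have "nu V (x / x)" using n by metis
  moreover have "x \<noteq> 0" using x subr_zero[OF S] by blast
  ultimately show False using subr_one[OF S] unfolding nu_def by simp
qed

lemma poly_diff_dvd:
  assumes S: "subr R" and x: "x \<in> R" and y: "y \<in> R"
  shows "(\<forall>i. coeff p i \<in> R) \<Longrightarrow> \<exists>q\<in>R. poly p x - poly p y = (x - y) * q"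
proof (induction p)
  case (pCons a p)
  have "\<forall>i. coeff p i \<in> R" using pCons(3) by (metis coeff_pCons_Suc)
  then obtain q where q: "q \<in> R" "poly p x - poly p y = (x - y) * q" using pCons by blast
  have pxR: "poly p x \<in> R" using subr_poly[OF S \<open>\<forall>i. coeff p i \<in> R\<close> x] .
  have "poly (pCons a p) x - poly (pCons a p) y = (x - y) * poly p x + y * (poly p x - poly p y)"
    by (simp add: algebra_simps)
  also have "\<dots> = (x - y) * poly p x + y * ((x - y) * q)" using q(2) by simp
  also have "\<dots> = (x - y) * (poly p x + y * q)" by (simp add: algebra_simps)
  finally show ?case using pxR q y S subr_add subr_mult by blast
qed (use subr_zero[OF S] in auto)

lemma assoc_gen:
  assumes CH: "CHAR('a::field) > 0" and S: "subr Rg" and c: "\<forall>i. coeff \<phi> i \<in> Rg"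
    and U: "\<forall>u. u \<in> Rg \<longrightarrow> inverse u \<in> Rg \<longrightarrow> algebraic_over_prime (u::'a)"
    and pO: "p \<in> Rg" and qO: "q \<in> Rg" and fq: "poly \<phi> q = q"
    and n: "n \<ge> 1" "(poly \<phi> ^^ n) p = p"
  shows "\<exists>c. algebraic_over_prime c \<and> (poly \<phi> ^^ i) p - q = c * (p - q)"
proof -
  have itO: "(poly \<phi> ^^ k) p \<in> Rg" for k
    by (induction k) (auto simp: pO intro: subr_poly[OF S c])
  have ch: "\<exists>e\<in>Rg. (poly \<phi> ^^ (i + j)) p - q = e * ((poly \<phi> ^^ i) p - q)" for i j
  proof (induction j)
    case 0 then show ?case using subr_one[OF S] by (intro bexI[of _ 1]) auto
  next
    case (Suc j)
    then obtain e where e: "e \<in> Rg" "(poly \<phi> ^^ (i + j)) p - q = e * ((poly \<phi> ^^ i) p - q)" by blast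
    obtain r where r: "r \<in> Rg" "poly \<phi> ((poly \<phi> ^^ (i + j)) p) - poly \<phi> q = ((poly \<phi> ^^ (i + j)) p - q) * r"
      using poly_diff_dvd[OF S itO qO c] by blast
    have "(poly \<phi> ^^ (i + Suc j)) p - q = ((poly \<phi> ^^ (i + j)) p - q) * r" using r fq by simp
    also have "\<dots> = (e * ((poly \<phi> ^^ i) p - q)) * r" using e(2) by simp
    also have "\<dots> = (e * r) * ((poly \<phi> ^^ i) p - q)" by (simp add: algebra_simps)
    finally show ?case using subr_mult[OF S e(1) r(1)] by blast
  qed
  obtain e where e: "e \<in> Rg" "(poly \<phi> ^^ i) p - q = e * (p - q)" using ch[of 0 i] by auto
  have pkn: "(poly \<phi> ^^ (i * n)) p = p"
    by (induction i) (simp_all add: funpow_add n(2) funpow_mult[symmetric] mult.commute)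
  have "i \<le> i * n" using n by simp
  then obtain f where f: "f \<in> Rg" "(poly \<phi> ^^ (i * n)) p - q = f * ((poly \<phi> ^^ i) p - q)"
    using ch[of i "i * n - i"] by auto
  show ?thesis
  proof (cases "p = q")
    case True
    then show ?thesis using e alg_zero by (intro exI[of _ 0]) auto
  next
    case False
    have "p - q = f * e * (p - q)" using f e pkn by simp
    then have fe: "f * e = 1" using False by simp
    then have "inverse e = f" by (metis inverse_unique mult.commute)
    then have "algebraic_over_prime e" using U e f by metis
    then show ?thesis using e by blast
  qed
qed

lemma L_gen:
  assumes CH: "CHAR('a::field) > 0" and S: "subr Rg" and c: "\<forall>i. coeff \<phi> i \<in> Rg"
    and U: "\<forall>u. u \<in> Rg \<longrightarrow> inverse u \<in> Rg \<longrightarrow> algebraic_over_prime (u::'a)"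
    and Per: "\<forall>x\<in>periodic_points (poly \<phi>). x \<in> Rg"
    and pP: "p \<in> periodic_points (poly \<phi>)" and np: "poly \<phi> p \<noteq> p"
    and a: "poly \<phi> a = a" "a \<in> Rg" and b: "poly \<phi> b = b" "b \<in> Rg"
  shows "\<exists>w. algebraic_over_prime w \<and> p - b = w * (p - a)"
proof -
  obtain n where n: "n \<ge> 1" "(poly \<phi> ^^ n) p = p" using pP unfolding periodic_points_def by blast
  have pO: "p \<in> Rg" using Per pP by blast
  obtain e where e: "algebraic_over_prime e" "poly \<phi> p - a = e * (p - a)"
    using assoc_gen[OF CH S c U pO a(2) a(1) n, of 1] by auto
  obtain f where f: "algebraic_over_prime f" "poly \<phi> p - b = f * (p - b)"
    using assoc_gen[OF CH S c U pO b(2) b(1) n, of 1] by auto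
  have f1: "f - 1 \<noteq> 0"
  proof
    assume "f - 1 = 0"
    then have "f = 1" by simp
    then show False using f(2) np by simp
  qed
  have "(f - 1) * (p - b) = poly \<phi> p - p" using f(2) by (simp add: algebra_simps)
  also have "\<dots> = (e - 1) * (p - a)" using e(2) by (simp add: algebra_simps)
  finally have "p - b = (e - 1) / (f - 1) * (p - a)" using f1 by (simp add: field_simps)
  moreover have "algebraic_over_prime ((e - 1) / (f - 1))"
    using alg_closed[OF CH] alg_one[OF CH] e f by metis
  ultimately show ?thesis by blast
qed

theorem lemma2p10:
  fixes Vinf :: "'a::field set" and \<phi> :: "'a poly"
  assumes "global_function_field TYPE('a)"
    and "is_prime_of Vinf"
    and "\<forall>i. coeff \<phi> i \<in> ring_away_from Vinf"
    and "degree \<phi> \<ge> 2"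
    and "lead_coeff \<phi> \<in> ring_away_from Vinf"
    and "inverse (lead_coeff \<phi>) \<in> ring_away_from Vinf"
    and "\<exists>x y. x \<noteq> y \<and> poly \<phi> x = x \<and> poly \<phi> y = y"
    and "\<exists>x \<in> periodic_points (poly \<phi>). poly \<phi> x \<noteq> x"
  shows "poly \<phi> ` periodic_points (poly \<phi>) \<subseteq> periodic_points (poly \<phi>)
    \<and> (\<forall>x\<in>periodic_points (poly \<phi>). \<forall>y\<in>periodic_points (poly \<phi>).
         \<forall>x'\<in>periodic_points (poly \<phi>). \<forall>y'\<in>periodic_points (poly \<phi>).
           x \<noteq> y \<longrightarrow> x' \<noteq> y' \<longrightarrow>
           (\<exists>c\<in>constant_field. c \<noteq> 0 \<and> y - x = c * (y' - x')))"
proof -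
  define P where "P = periodic_points (poly \<phi>)"
  define Rg where "Rg = ring_away_from Vinf"
  have CH: "CHAR('a) > 0" using assms(1) unfolding global_function_field_def by blast
  have S: "subr Rg" unfolding Rg_def by (rule subr_O)
  have c: "\<forall>i. coeff \<phi> i \<in> Rg" using assms(3) unfolding Rg_def .
  have U: "\<forall>u. u \<in> Rg \<longrightarrow> inverse u \<in> Rg \<longrightarrow> algebraic_over_prime u"
    using unit_alg[OF CH assms(2)] unfolding Rg_def by blast
  have l0: "lead_coeff \<phi> \<noteq> 0" using assms(4) by auto
  have Per: "\<forall>x\<in>P. x \<in> Rg"
  proof
    fix x assume "x \<in> P"
    then obtain n where n: "n \<ge> 1" "(poly \<phi> ^^ n) x = x" unfolding P_def periodic_points_def by blast
    show "x \<in> Rg" unfolding Rg_def ring_away_from_def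
    proof (intro CollectI allI impI)
      fix V assume V: "is_prime_of V \<and> V \<noteq> Vinf"
      have cV: "\<forall>i. coeff \<phi> i \<in> V" using assms(3) V unfolding ring_away_from_def by blast
      have "un V (lead_coeff \<phi>)" using assms(5,6) V l0 unfolding ring_away_from_def un_def by blast
      then show "x \<in> V" using periodic_in_V[OF _ cV _ assms(4) n] V by blast
    qed
  qed
  have part1: "poly \<phi> ` P \<subseteq> P"
  proof
    fix y assume "y \<in> poly \<phi> ` P"
    then obtain x where x: "x \<in> P" "y = poly \<phi> x" by blast
    then obtain n where n: "n \<ge> 1" "(poly \<phi> ^^ n) x = x" unfolding P_def periodic_points_def by blast
    have "(poly \<phi> ^^ n) y = y" using n x(2) by (metis funpow_swap1)
    then show "y \<in> P" using n unfolding P_def periodic_points_def by blast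
  qed
  have fixP: "x \<in> P" if "poly \<phi> x = x" for x
    unfolding P_def periodic_points_def using that by (intro CollectI exI[of _ 1]) auto
  obtain a b where ab: "a \<noteq> b" "poly \<phi> a = a" "poly \<phi> b = b" using assms(7) by blast
  obtain x0 where x0: "x0 \<in> P" "poly \<phi> x0 \<noteq> x0" using assms(8) unfolding P_def by blast
  have aO: "a \<in> Rg" and bO: "b \<in> Rg" using fixP ab Per by blast+
  define D where "D = x0 - a"
  have D0: "D \<noteq> 0" using x0 ab unfolding D_def by auto
  have Pdef: "P = periodic_points (poly \<phi>)" by (simp add: P_def)
  obtain w where w: "algebraic_over_prime w" "x0 - b = w * D"
    using L_gen[OF CH S c U Per[unfolded Pdef] x0(1)[unfolded Pdef] x0(2) ab(2) aO ab(3) bO] D_def by blast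
  have cl: "\<exists>cz. algebraic_over_prime cz \<and> z - a = cz * D" if zP: "z \<in> P" for z
  proof (cases "poly \<phi> z = z")
    case True
    have zO: "z \<in> Rg" using zP Per by blast
    obtain w' where w': "algebraic_over_prime w'" "x0 - z = w' * D"
      using L_gen[OF CH S c U Per[unfolded Pdef] x0(1)[unfolded Pdef] x0(2) ab(2) aO True zO] D_def by blast
    have "z - a = (1 - w') * D" using w'(2) unfolding D_def by (simp add: algebra_simps)
    moreover have "algebraic_over_prime (1 - w')" using alg_closed[OF CH] alg_one[OF CH] w' by metis
    ultimately show ?thesis by blast
  next
    case False
    obtain wz where wz: "algebraic_over_prime wz" "z - b = wz * (z - a)"
      using L_gen[OF CH S c U Per[unfolded Pdef] zP[unfolded Pdef] False ab(2) aO ab(3) bO] by blast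
    have e1: "a - b = (wz - 1) * (z - a)" using wz(2) by (simp add: algebra_simps)
    have e2: "a - b = (w - 1) * D" using w(2) unfolding D_def by (simp add: algebra_simps)
    have wz1: "wz - 1 \<noteq> 0" using e1 ab(1) by auto
    have h: "(wz - 1) * (z - a) = (w - 1) * D" using e1 e2 by simp
    have "z - a = ((wz - 1) * (z - a)) / (wz - 1)" using wz1 by simp
    also have "\<dots> = (w - 1) / (wz - 1) * D" unfolding h by simp
    finally have "z - a = (w - 1) / (wz - 1) * D" .
    moreover have "algebraic_over_prime ((w - 1) / (wz - 1))"
      using alg_closed[OF CH] alg_one[OF CH] w wz by metis
    ultimately show ?thesis by blast
  qed
  have part2: "\<exists>c\<in>constant_field. c \<noteq> 0 \<and> y - x = c * (y' - x')"
    if xy: "x \<in> P" "y \<in> P" "x' \<in> P" "y' \<in> P" "x \<noteq> y" "x' \<noteq> y'" for x y x' y'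
  proof -
    obtain cx where cx: "algebraic_over_prime cx" "x - a = cx * D" using cl xy by blast
    obtain cy where cy: "algebraic_over_prime cy" "y - a = cy * D" using cl xy by blast
    obtain cx' where cx': "algebraic_over_prime cx'" "x' - a = cx' * D" using cl xy by blast
    obtain cy' where cy': "algebraic_over_prime cy'" "y' - a = cy' * D" using cl xy by blast
    have d1: "y - x = (cy - cx) * D" using cx cy by (simp add: algebra_simps)
    have d2: "y' - x' = (cy' - cx') * D" using cx' cy' by (simp add: algebra_simps)
    have n1: "cy - cx \<noteq> 0" using d1 xy(5) by auto
    have n2: "cy' - cx' \<noteq> 0" using d2 xy(6) by auto
    define cc where "cc = (cy - cx) / (cy' - cx')"
    have "y - x = cc * (y' - x')" unfolding cc_def d1 d2 using n2 by simp
    moreover have "cc \<noteq> 0" unfolding cc_def using n1 n2 by simp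
    moreover have "algebraic_over_prime cc" unfolding cc_def
      using alg_closed[OF CH] cx cy cx' cy' by metis
    ultimately show ?thesis unfolding constant_field_def by blast
  qed
  show ?thesis using part1 part2 unfolding P_def by blast
qed

end
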